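(* Let $t=\alpha^\mu\beta^\nu$ with $\mu\in\mathbb{Z}_{\ge0}^m$, $\nu\in\mathbb{Z}_{\ge0}^n$. If $t$ has a syl-representation, then $t$ has a res-representation.
   Context: For $M\in\{0,1\}^{m\times n}$: $\bar M_{ij}=1-M_{ij}$; $rs(M)=(\sum_j M_{ij})_i$; $cs(M)=(\sum_i M_{ij})_j$; $ars(M)=(i+\sum_j M_{ij})_{i=1..m}$; $acs(M)=(j+\sum_i M_{ij})_{j=1..n}$. A res-representation of $\alpha^\mu\beta^\nu$ is $\mathcal{R}\in\{0,1\}^{m\times n}$ with $rs(\mathcal{R})=\mu$ and $cs(\bar{\mathcal{R}})=\nu$. $PC(A,B)$ means $\{acs(A)_1,\dots,acs(A)_n,ars(B)_1,\dots,ars(B)_m\}=\{1,\dots,m+n\}$. A syl-representation of $\alpha^\mu\beta^\nu$ is a pair $(\mathcal{S}_1,\mathcal{S}_2)$ in $\{0,1\}^{m\times n}$ with $rs(\mathcal{S}_1)=\mu$, $cs(\mathcal{S}_2)=\nu$, $PC(\mathcal{S}_1,\mathcal{S}_2)$. *)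

theory Defs
  imports Main
begin

(* An m x n 0/1 matrix is modelled as M :: nat => nat => nat, indices i in {1..m}, j in {1..n}
   (entries outside this range are irrelevant). Vectors mu, nu :: nat => nat, 1-based. *)

definition is01 :: "nat \<Rightarrow> nat \<Rightarrow> (nat \<Rightarrow> nat \<Rightarrow> nat) \<Rightarrow> bool" where
  "is01 m n M \<longleftrightarrow> (\<forall>i\<in>{1..m}. \<forall>j\<in>{1..n}. M i j \<in> {0,1})"

definition compl :: "(nat \<Rightarrow> nat \<Rightarrow> nat) \<Rightarrow> nat \<Rightarrow> nat \<Rightarrow> nat" where
  "compl M i j = 1 - M i j"

definition rs :: "nat \<Rightarrow> (nat \<Rightarrow> nat \<Rightarrow> nat) \<Rightarrow> nat \<Rightarrow> nat" where
  "rs n M i = (\<Sum>j=1..n. M i j)"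

definition cs :: "nat \<Rightarrow> (nat \<Rightarrow> nat \<Rightarrow> nat) \<Rightarrow> nat \<Rightarrow> nat" where
  "cs m M j = (\<Sum>i=1..m. M i j)"

definition ars :: "nat \<Rightarrow> (nat \<Rightarrow> nat \<Rightarrow> nat) \<Rightarrow> nat \<Rightarrow> nat" where
  "ars n M i = i + rs n M i"

definition acs :: "nat \<Rightarrow> (nat \<Rightarrow> nat \<Rightarrow> nat) \<Rightarrow> nat \<Rightarrow> nat" where
  "acs m M j = j + cs m M j"

definition PC :: "nat \<Rightarrow> nat \<Rightarrow> (nat \<Rightarrow> nat \<Rightarrow> nat) \<Rightarrow> (nat \<Rightarrow> nat \<Rightarrow> nat) \<Rightarrow> bool" where
  "PC m n A B \<longleftrightarrow> acs m A ` {1..n} \<union> ars n B ` {1..m} = {1..m+n}"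

definition res_rep :: "nat \<Rightarrow> nat \<Rightarrow> (nat \<Rightarrow> nat) \<Rightarrow> (nat \<Rightarrow> nat) \<Rightarrow> (nat \<Rightarrow> nat \<Rightarrow> nat) \<Rightarrow> bool" where
  "res_rep m n \<mu> \<nu> R \<longleftrightarrow> is01 m n R \<and> (\<forall>i\<in>{1..m}. rs n R i = \<mu> i)
     \<and> (\<forall>j\<in>{1..n}. cs m (compl R) j = \<nu> j)"

definition syl_rep :: "nat \<Rightarrow> nat \<Rightarrow> (nat \<Rightarrow> nat) \<Rightarrow> (nat \<Rightarrow> nat) \<Rightarrow> (nat \<Rightarrow> nat \<Rightarrow> nat) \<Rightarrow> (nat \<Rightarrow> nat \<Rightarrow> nat) \<Rightarrow> bool" where
  "syl_rep m n \<mu> \<nu> S1 S2 \<longleftrightarrow> is01 m n S1 \<and> is01 m n S2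
     \<and> (\<forall>i\<in>{1..m}. rs n S1 i = \<mu> i) \<and> (\<forall>j\<in>{1..n}. cs m S2 j = \<nu> j)
     \<and> PC m n S1 S2"

end

theory Submission
  imports Defs
begin


lemma sum_upd_nat:
  assumes "finite A" "i \<in> A"
  shows "sum (f(i:=x)) A + (f i::nat) = sum f A + x"
proof -
  have "sum (f(i:=x)) A = x + sum (f(i:=x)) (A - {i})" using assms by (simp add: sum.remove)
  also have "sum (f(i:=x)) (A - {i}) = sum f (A - {i})" by (rule sum.cong) auto
  finally show ?thesis using assms by (simp add: sum.remove)
qed

lemma sum_upd_nat_out:
  assumes "i \<notin> A"
  shows "sum (f(i:=x)) A = sum f A"
  using assms by (intro sum.cong) auto

lemma card_row_finite: "finite F \<Longrightarrow> finite {j. (i,j)\<in>F}"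
  by (rule finite_subset[of _ "snd ` F"]) force+

lemma card_col_finite: "finite F \<Longrightarrow> finite {i. (i,j)\<in>F}"
  by (rule finite_subset[of _ "fst ` F"]) force+

lemma tight_sets:
  fixes \<mu> \<nu> :: "nat \<Rightarrow> nat"
  assumes fin: "finite G" and eG: "(i,j) \<notin> G" and im: "i \<in> {1..m}"
    and cond: "\<forall>I J. I \<subseteq> {1..m} \<longrightarrow> J \<subseteq> {1..n} \<longrightarrow> card (insert (i,j) G \<inter> I\<times>J) \<le> sum \<mu> I + sum \<nu> J"
    and nA: "\<not> (1 \<le> \<mu> i \<and> (\<forall>I J. I \<subseteq> {1..m} \<longrightarrow> J \<subseteq> {1..n} \<longrightarrow> card (G \<inter> I\<times>J) \<le> sum (\<mu>(i:=\<mu> i - 1)) I + sum \<nu> J))"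
  shows "\<exists>I J. I \<subseteq> {1..m} \<and> J \<subseteq> {1..n} \<and> i \<in> I \<and> j \<notin> J \<and> sum \<mu> I + sum \<nu> J \<le> card (insert (i,j) G \<inter> I\<times>J)"
proof (cases "\<mu> i = 0")
  case True
  then show ?thesis using im by (intro exI[of _ "{i}"] exI[of _ "{}"]) auto
next
  case False
  then obtain I J where IJ: "I \<subseteq> {1..m}" "J \<subseteq> {1..n}"
    and gt: "sum (\<mu>(i:=\<mu> i - 1)) I + sum \<nu> J < card (G \<inter> I\<times>J)" using nA by force
  have finI: "finite I" using IJ finite_subset by blast
  have sub: "G \<inter> I\<times>J \<subseteq> insert (i,j) G \<inter> I\<times>J" by blast
  have fin2: "finite (insert (i,j) G \<inter> I\<times>J)" using fin by simp
  have c1: "card (G \<inter> I\<times>J) \<le> card (insert (i,j) G \<inter> I\<times>J)" by (rule card_mono[OF fin2 sub])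
  have iI: "i \<in> I"
  proof (rule ccontr)
    assume "i \<notin> I"
    then have "sum (\<mu>(i:=\<mu> i - 1)) I = sum \<mu> I" by (rule sum_upd_nat_out)
    moreover have "card (insert (i,j) G \<inter> I\<times>J) \<le> sum \<mu> I + sum \<nu> J" using cond IJ by blast
    ultimately show False using gt c1 by linarith
  qed
  have s: "sum (\<mu>(i:=\<mu> i - 1)) I + 1 = sum \<mu> I"
    using sum_upd_nat[OF finI iI, of \<mu> "\<mu> i - 1"] False by simp
  have jJ: "j \<notin> J"
  proof
    assume "j \<in> J"
    then have "insert (i,j) G \<inter> I\<times>J = insert (i,j) (G \<inter> I\<times>J)" using iI by blast
    then have "card (insert (i,j) G \<inter> I\<times>J) = card (G \<inter> I\<times>J) + 1" using eG fin by simp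
    moreover have "card (insert (i,j) G \<inter> I\<times>J) \<le> sum \<mu> I + sum \<nu> J" using cond IJ by blast
    ultimately show False using gt s by linarith
  qed
  show ?thesis using IJ iI jJ gt s c1 by (intro exI[of _ I] exI[of _ J]) auto
qed

lemma tight_sets2:
  fixes \<mu> \<nu> :: "nat \<Rightarrow> nat"
  assumes fin: "finite G" and eG: "(i,j) \<notin> G" and jn: "j \<in> {1..n}"
    and cond: "\<forall>I J. I \<subseteq> {1..m} \<longrightarrow> J \<subseteq> {1..n} \<longrightarrow> card (insert (i,j) G \<inter> I\<times>J) \<le> sum \<mu> I + sum \<nu> J"
    and nA: "\<not> (1 \<le> \<nu> j \<and> (\<forall>I J. I \<subseteq> {1..m} \<longrightarrow> J \<subseteq> {1..n} \<longrightarrow> card (G \<inter> I\<times>J) \<le> sum \<mu> I + sum (\<nu>(j:=\<nu> j - 1)) J))"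
  shows "\<exists>I J. I \<subseteq> {1..m} \<and> J \<subseteq> {1..n} \<and> j \<in> J \<and> i \<notin> I \<and> sum \<mu> I + sum \<nu> J \<le> card (insert (i,j) G \<inter> I\<times>J)"
proof (cases "\<nu> j = 0")
  case True
  then show ?thesis using jn by (intro exI[of _ "{}"] exI[of _ "{j}"]) auto
next
  case False
  then obtain I J where IJ: "I \<subseteq> {1..m}" "J \<subseteq> {1..n}"
    and gt: "sum \<mu> I + sum (\<nu>(j:=\<nu> j - 1)) J < card (G \<inter> I\<times>J)" using nA by force
  have finJ: "finite J" using IJ finite_subset by blast
  have sub: "G \<inter> I\<times>J \<subseteq> insert (i,j) G \<inter> I\<times>J" by blast
  have fin2: "finite (insert (i,j) G \<inter> I\<times>J)" using fin by simp
  have c1: "card (G \<inter> I\<times>J) \<le> card (insert (i,j) G \<inter> I\<times>J)" by (rule card_mono[OF fin2 sub])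
  have jJ: "j \<in> J"
  proof (rule ccontr)
    assume "j \<notin> J"
    then have "sum (\<nu>(j:=\<nu> j - 1)) J = sum \<nu> J" by (rule sum_upd_nat_out)
    moreover have "card (insert (i,j) G \<inter> I\<times>J) \<le> sum \<mu> I + sum \<nu> J" using cond IJ by blast
    ultimately show False using gt c1 by linarith
  qed
  have s: "sum (\<nu>(j:=\<nu> j - 1)) J + 1 = sum \<nu> J"
    using sum_upd_nat[OF finJ jJ, of \<nu> "\<nu> j - 1"] False by simp
  have iI: "i \<notin> I"
  proof
    assume "i \<in> I"
    then have "insert (i,j) G \<inter> I\<times>J = insert (i,j) (G \<inter> I\<times>J)" using jJ by blast
    then have "card (insert (i,j) G \<inter> I\<times>J) = card (G \<inter> I\<times>J) + 1" using eG fin by simp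
    moreover have "card (insert (i,j) G \<inter> I\<times>J) \<le> sum \<mu> I + sum \<nu> J" using cond IJ by blast
    ultimately show False using gt s by linarith
  qed
  show ?thesis using IJ iI jJ gt s c1 by (intro exI[of _ I] exI[of _ J]) auto
qed

lemma orient:
  fixes m n :: nat
  assumes "finite G"
  shows "\<And>\<mu> \<nu>. G \<subseteq> {1..m}\<times>{1..n} \<Longrightarrow> card G = sum \<mu> {1..m} + sum \<nu> {1..n} \<Longrightarrow>
    (\<forall>I J. I \<subseteq> {1..m} \<longrightarrow> J \<subseteq> {1..n} \<longrightarrow> card (G \<inter> I\<times>J) \<le> sum \<mu> I + sum \<nu> J) \<Longrightarrow>
    \<exists>F\<subseteq>G. (\<forall>i\<in>{1..m}. card {j. (i,j)\<in>F} = \<mu> i) \<and> (\<forall>j\<in>{1..n}. card {i. (i,j) \<in> G - F} = \<nu> j)"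
  using assms
proof (induction G rule: finite_induct)
  case empty
  then have "\<forall>i\<in>{1..m}. \<mu> i = 0" "\<forall>j\<in>{1..n}. \<nu> j = 0" by auto
  then show ?case by auto
next
  case (insert e G)
  obtain i j where e: "e = (i,j)" by force
  have ij: "i \<in> {1..m}" "j \<in> {1..n}" using insert.prems(1) e by auto
  have cG: "card (insert e G) = card G + 1" using insert.hyps by simp
  show ?case
  proof (cases "1 \<le> \<mu> i \<and> (\<forall>I J. I \<subseteq> {1..m} \<longrightarrow> J \<subseteq> {1..n} \<longrightarrow> card (G \<inter> I\<times>J) \<le> sum (\<mu>(i:=\<mu> i - 1)) I + sum \<nu> J)")
    case True
    have "sum (\<mu>(i:=\<mu> i - 1)) {1..m} + \<mu> i = sum \<mu> {1..m} + (\<mu> i - 1)"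
      by (rule sum_upd_nat) (use ij in auto)
    then have "card G = sum (\<mu>(i:=\<mu> i - 1)) {1..m} + sum \<nu> {1..n}"
      using True cG insert.prems(2) by linarith
    then obtain F where F: "F \<subseteq> G" "\<forall>i'\<in>{1..m}. card {j'. (i',j')\<in>F} = (\<mu>(i:=\<mu> i - 1)) i'"
      "\<forall>j'\<in>{1..n}. card {i'. (i',j') \<in> G - F} = \<nu> j'"
      using insert.IH[of "\<mu>(i:=\<mu> i - 1)" \<nu>] insert.prems(1) True by blast
    have finF: "finite F" using F(1) insert.hyps(1) finite_subset by blast
    have "\<forall>i'\<in>{1..m}. card {j'. (i',j')\<in>insert e F} = \<mu> i'"
    proof
      fix i' assume i': "i' \<in> {1..m}"
      show "card {j'. (i',j')\<in>insert e F} = \<mu> i'"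
      proof (cases "i' = i")
        case True
        have "{j'. (i',j')\<in>insert e F} = insert j {j'. (i,j')\<in>F}" using True e by auto
        moreover have "j \<notin> {j'. (i,j')\<in>F}" using F(1) insert.hyps(2) e by auto
        ultimately show ?thesis using card_row_finite[OF finF, of i] F(2) i' True \<open>1 \<le> \<mu> i \<and> _\<close> by simp
      next
        case False
        have "{j'. (i',j')\<in>insert e F} = {j'. (i',j')\<in>F}" using False e by auto
        then show ?thesis using F(2) i' False by simp
      qed
    qed
    moreover have "insert e G - insert e F = G - F" using insert.hyps(2) F(1) by blast
    ultimately show ?thesis using F by (intro exI[of _ "insert e F"]) auto
  next
    case nA: False
    show ?thesis
    proof (cases "1 \<le> \<nu> j \<and> (\<forall>I J. I \<subseteq> {1..m} \<longrightarrow> J \<subseteq> {1..n} \<longrightarrow> card (G \<inter> I\<times>J) \<le> sum \<mu> I + sum (\<nu>(j:=\<nu> j - 1)) J)")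
      case True
      have "sum (\<nu>(j:=\<nu> j - 1)) {1..n} + \<nu> j = sum \<nu> {1..n} + (\<nu> j - 1)"
        by (rule sum_upd_nat) (use ij in auto)
      then have "card G = sum \<mu> {1..m} + sum (\<nu>(j:=\<nu> j - 1)) {1..n}"
        using True cG insert.prems(2) by linarith
      then obtain F where F: "F \<subseteq> G" "\<forall>i'\<in>{1..m}. card {j'. (i',j')\<in>F} = \<mu> i'"
        "\<forall>j'\<in>{1..n}. card {i'. (i',j') \<in> G - F} = (\<nu>(j:=\<nu> j - 1)) j'"
        using insert.IH[of \<mu> "\<nu>(j:=\<nu> j - 1)"] insert.prems(1) True by blast
      have finF: "finite (G - F)" using insert.hyps(1) by blast
      have "\<forall>j'\<in>{1..n}. card {i'. (i',j')\<in>insert e G - F} = \<nu> j'"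
      proof
        fix j' assume j': "j' \<in> {1..n}"
        show "card {i'. (i',j')\<in>insert e G - F} = \<nu> j'"
        proof (cases "j' = j")
          case True
          have "{i'. (i',j')\<in>insert e G - F} = insert i {i'. (i',j)\<in>G - F}" using True e F(1) insert.hyps(2) by auto
          moreover have "i \<notin> {i'. (i',j)\<in>G - F}" using insert.hyps(2) e by auto
          ultimately show ?thesis using card_col_finite[OF finF, of j] F(3) j' True \<open>1 \<le> \<nu> j \<and> _\<close> by simp
        next
          case False
          have "{i'. (i',j')\<in>insert e G - F} = {i'. (i',j')\<in>G - F}" using False e by auto
          then show ?thesis using F(3) j' False by simp
        qed
      qed
      moreover have "\<forall>i'\<in>{1..m}. card {j'. (i',j')\<in>F} = \<mu> i'" using F(2) by blast
      ultimately show ?thesis using F by (intro exI[of _ F]) auto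
    next
      case nB: False
      obtain I1 J1 where A: "I1 \<subseteq> {1..m}" "J1 \<subseteq> {1..n}" "i \<in> I1" "j \<notin> J1"
        "sum \<mu> I1 + sum \<nu> J1 \<le> card (insert (i,j) G \<inter> I1\<times>J1)"
        using tight_sets[OF insert.hyps(1) insert.hyps(2)[unfolded e] ij(1) insert.prems(3)[unfolded e] nA] by blast
      obtain I2 J2 where B: "I2 \<subseteq> {1..m}" "J2 \<subseteq> {1..n}" "j \<in> J2" "i \<notin> I2"
        "sum \<mu> I2 + sum \<nu> J2 \<le> card (insert (i,j) G \<inter> I2\<times>J2)"
        using tight_sets2[OF insert.hyps(1) insert.hyps(2)[unfolded e] ij(2) insert.prems(3)[unfolded e] nB] by blast
      define H where "H = insert (i,j) G"
      have finH: "finite H" using insert.hyps(1) H_def by simp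
      let ?A = "H \<inter> I1\<times>J1" and ?B = "H \<inter> I2\<times>J2"
      have fA: "finite ?A" "finite ?B" using finH by auto
      have AB: "card ?A + card ?B = card (?A \<union> ?B) + card (?A \<inter> ?B)" by (rule card_Un_Int[OF fA])
      have int: "?A \<inter> ?B = H \<inter> (I1\<inter>I2)\<times>(J1\<inter>J2)" by blast
      have un: "?A \<union> ?B \<subset> H \<inter> (I1\<union>I2)\<times>(J1\<union>J2)"
      proof
        show "?A \<union> ?B \<subseteq> H \<inter> (I1\<union>I2)\<times>(J1\<union>J2)" by blast
        have "(i,j) \<in> H \<inter> (I1\<union>I2)\<times>(J1\<union>J2)" "(i,j) \<notin> ?A \<union> ?B" using A B H_def by auto
        then show "?A \<union> ?B \<noteq> H \<inter> (I1\<union>I2)\<times>(J1\<union>J2)" by blast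
      qed
      have cu: "card (?A \<union> ?B) < card (H \<inter> (I1\<union>I2)\<times>(J1\<union>J2))"
        by (rule psubset_card_mono[OF _ un]) (use finH in auto)
      have fin1: "finite I1" "finite I2" "finite J1" "finite J2"
        using A(1,2) B(1,2) by (meson finite_atLeastAtMost finite_subset)+
      have sI: "sum \<mu> (I1\<union>I2) + sum \<mu> (I1\<inter>I2) = sum \<mu> I1 + sum \<mu> I2" by (rule sum.union_inter[OF fin1(1,2)])
      have sJ: "sum \<nu> (J1\<union>J2) + sum \<nu> (J1\<inter>J2) = sum \<nu> J1 + sum \<nu> J2" by (rule sum.union_inter[OF fin1(3,4)])
      have c1: "card (H \<inter> (I1\<union>I2)\<times>(J1\<union>J2)) \<le> sum \<mu> (I1\<union>I2) + sum \<nu> (J1\<union>J2)"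
        using insert.prems(3)[rule_format, of "I1\<union>I2" "J1\<union>J2"] A(1,2) B(1,2) e H_def by simp
      have c2: "card (H \<inter> (I1\<inter>I2)\<times>(J1\<inter>J2)) \<le> sum \<mu> (I1\<inter>I2) + sum \<nu> (J1\<inter>J2)"
        using insert.prems(3)[rule_format, of "I1\<inter>I2" "J1\<inter>J2"] A(1,2) B(1,2) e H_def by auto
      have "card ?A + card ?B < sum \<mu> I1 + sum \<mu> I2 + sum \<nu> J1 + sum \<nu> J2"
        using AB arg_cong[OF int, of card] cu sI sJ c1 c2 by linarith
      moreover have "sum \<mu> I1 + sum \<nu> J1 \<le> card ?A" "sum \<mu> I2 + sum \<nu> J2 \<le> card ?B"
        using A(5) B(5) H_def by simp_all
      ultimately show ?thesis by linarith
    qed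
  qed
qed



lemma sum_lower:
  fixes V :: "nat set"
  shows "finite V \<Longrightarrow> \<forall>x\<in>V. c \<le> x \<Longrightarrow> 2*card V*c + card V*card V \<le> 2*sum id V + card V"
proof (induction "card V" arbitrary: V)
  case 0 then show ?case by simp
next
  case (Suc k)
  then have ne: "V \<noteq> {}" by auto
  define M where "M = Max V"
  have MV: "M \<in> V" using Max_in Suc ne M_def by blast
  have k: "card (V - {M}) = k" using Suc.hyps(2) MV Suc.prems by simp
  have IH: "2*k*c + k*k \<le> 2*sum id (V-{M}) + k" using Suc.hyps(1)[of "V - {M}"] k Suc.prems by auto
  have sub: "V \<subseteq> {c..M}" using Suc.prems M_def by auto
  have "Suc k \<le> Suc M - c" using card_mono[OF _ sub] Suc.hyps(2) by simp
  hence cM: "c + k \<le> M" by arith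
  have s: "sum id V = M + sum id (V - {M})" using sum.remove[OF Suc.prems(1) MV] by simp
  show ?case using IH cM s Suc.hyps(2)[symmetric] by (simp add: algebra_simps)
qed

lemma sum_upper:
  fixes V :: "nat set"
  shows "finite V \<Longrightarrow> \<forall>x\<in>V. x \<le> c \<Longrightarrow> 2*sum id V + card V*card V \<le> 2*card V*c + card V"
proof (induction "card V" arbitrary: V)
  case 0 then show ?case by simp
next
  case (Suc k)
  then have ne: "V \<noteq> {}" by auto
  define M where "M = Min V"
  have MV: "M \<in> V" using Min_in Suc ne M_def by blast
  have k: "card (V - {M}) = k" using Suc.hyps(2) MV Suc.prems by simp
  have IH: "2*sum id (V-{M}) + k*k \<le> 2*k*c + k" using Suc.hyps(1)[of "V - {M}"] k Suc.prems by auto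
  have sub: "V \<subseteq> {M..c}" using Suc.prems M_def by auto
  have "Suc k \<le> Suc c - M" using card_mono[OF _ sub] Suc.hyps(2) by simp
  hence cM: "M + k \<le> c" by arith
  have s: "sum id V = M + sum id (V - {M})" using sum.remove[OF Suc.prems(1) MV] by simp
  show ?case using IH cM s Suc.hyps(2)[symmetric] by (simp add: algebra_simps)
qed

lemma partA:
  fixes X :: "nat \<Rightarrow> nat \<Rightarrow> nat"
  assumes X1: "\<forall>i\<in>{1..m}. \<forall>j\<in>{1..n}. X i j \<le> 1" and I: "I \<subseteq> {1..m}" and J0: "J0 \<subseteq> {1..n}"
  shows "sum (cs m X) J0 + card J0 * card I \<le> sum (rs n X) I + card J0 * m"
proof -
  have finI: "finite I" using I finite_subset by blast
  have pm: "card I \<le> m" using card_mono[OF _ I] by simp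
  have col: "cs m X j + card I \<le> (\<Sum>i\<in>I. X i j) + m" if j: "j \<in> J0" for j
  proof -
    have "cs m X j = (\<Sum>i\<in>I. X i j) + (\<Sum>i\<in>{1..m}-I. X i j)"
      unfolding cs_def using sum.subset_diff[OF I, of "\<lambda>i. X i j"] by simp
    moreover have "(\<Sum>i\<in>{1..m}-I. X i j) \<le> (\<Sum>i\<in>{1..m}-I. (1::nat))"
      by (rule sum_mono) (use X1 j J0 in auto)
    moreover have "card ({1..m}-I) = m - card I" using card_Diff_subset[OF finI I] by simp
    ultimately show ?thesis using pm by simp
  qed
  have "sum (cs m X) J0 + card J0 * card I = (\<Sum>j\<in>J0. cs m X j + card I)" by (simp add: sum.distrib)
  also have "\<dots> \<le> (\<Sum>j\<in>J0. (\<Sum>i\<in>I. X i j) + m)" by (rule sum_mono) (use col in auto)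
  also have "\<dots> = (\<Sum>j\<in>J0. \<Sum>i\<in>I. X i j) + card J0 * m" by (simp add: sum.distrib)
  also have "(\<Sum>j\<in>J0. \<Sum>i\<in>I. X i j) = (\<Sum>i\<in>I. \<Sum>j\<in>J0. X i j)" by (rule sum.swap)
  also have "\<dots> \<le> (\<Sum>i\<in>I. \<Sum>j\<in>{1..n}. X i j)"
    by (rule sum_mono, rule sum_mono2) (use J0 in auto)
  also have "\<dots> = sum (rs n X) I" unfolding rs_def by simp
  finally show ?thesis by simp
qed

lemma cut:
  fixes X Y :: "nat \<Rightarrow> nat \<Rightarrow> nat" and m n :: nat and a b :: "nat \<Rightarrow> nat"
  assumes a_def: "\<And>j. a j = j + cs m X j" and b_def: "\<And>i. b i = i + rs n Y i"
  assumes X1: "\<forall>i\<in>{1..m}. \<forall>j\<in>{1..n}. X i j \<le> 1" and Y1: "\<forall>i\<in>{1..m}. \<forall>j\<in>{1..n}. Y i j \<le> 1"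
    and inja: "inj_on a {1..n}" and injb: "inj_on b {1..m}"
    and disj: "a ` {1..n} \<inter> b ` {1..m} = {}"
    and cov: "a ` {1..n} \<union> b ` {1..m} = {1..m+n}"
    and I: "I \<subseteq> {1..m}" and J: "J \<subseteq> {1..n}"
  shows "card I * card J \<le> sum (rs n X) I + sum (cs m Y) J"
proof -
  define p where "p = card I"
  define q where "q = card J"
  have qn: "q \<le> n" using card_mono[OF _ J] q_def by simp
  define f where "f T = card {j\<in>{1..n}. T < a j}" for T
  have f_step: "f T \<le> f (Suc T) + 1" for T
  proof -
    have "{j\<in>{1..n}. T < a j} \<subseteq> {j\<in>{1..n}. Suc T < a j} \<union> {j\<in>{1..n}. a j = Suc T}" by auto
    then have "f T \<le> card ({j\<in>{1..n}. Suc T < a j} \<union> {j\<in>{1..n}. a j = Suc T})"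
      unfolding f_def by (intro card_mono) auto
    also have "\<dots> \<le> f (Suc T) + card {j\<in>{1..n}. a j = Suc T}" unfolding f_def by (rule card_Un_le)
    also have "card {j\<in>{1..n}. a j = Suc T} \<le> Suc 0"
    proof (subst card_le_Suc0_iff_eq, simp, intro ballI)
      fix x y assume "x \<in> {j\<in>{1..n}. a j = Suc T}" "y \<in> {j\<in>{1..n}. a j = Suc T}"
      then show "x = y" using inj_onD[OF inja, of x y] by simp
    qed
    finally show ?thesis by simp
  qed
  have f0: "f 0 = n"
  proof -
    have "{j\<in>{1..n}. 0 < a j} = {1..n}" using a_def by auto
    then show ?thesis unfolding f_def by (metis card_atLeastAtMost diff_Suc_1)
  qed
  have amax: "a j \<le> m + n" if "j \<in> {1..n}" for j using cov that by auto
  have fmn: "f (m+n) = 0" unfolding f_def using amax by (auto simp: not_less)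
  define T where "T = (LEAST T. f T \<le> q)"
  have fT: "f T \<le> q" unfolding T_def by (rule LeastI[of _ "m+n"]) (simp add: fmn)
  have Tle: "T \<le> m+n" unfolding T_def by (rule Least_le) (simp add: fmn)
  have fTq: "f T = q"
  proof (cases T)
    case 0 then show ?thesis using fT f0 qn by simp
  next
    case (Suc T')
    have "\<not> f T' \<le> q" using not_less_Least[of T' "\<lambda>T. f T \<le> q"] Suc T_def by simp
    then show ?thesis using f_step[of T'] fT Suc by simp
  qed
  define J0 where "J0 = {j\<in>{1..n}. T < a j}"
  define I0 where "I0 = {i\<in>{1..m}. T < b i}"
  define v where "v = card I0"
  have cJ0: "card J0 = q" using fTq unfolding f_def J0_def by simp
  have J0s: "J0 \<subseteq> {1..n}" and I0s: "I0 \<subseteq> {1..m}" unfolding J0_def I0_def by auto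
  have V: "a ` J0 \<union> b ` I0 = {Suc T..m+n}"
  proof
    show "a ` J0 \<union> b ` I0 \<subseteq> {Suc T..m+n}" using cov unfolding J0_def I0_def by force
    show "{Suc T..m+n} \<subseteq> a ` J0 \<union> b ` I0"
    proof
      fix x assume x: "x \<in> {Suc T..m+n}"
      then have "x \<in> a ` {1..n} \<union> b ` {1..m}" using cov by auto
      then show "x \<in> a ` J0 \<union> b ` I0" using x unfolding J0_def I0_def by auto
    qed
  qed
  have dJI: "a ` J0 \<inter> b ` I0 = {}" using disj J0s I0s by blast
  have injJ0: "inj_on a J0" using inj_on_subset[OF inja J0s] .
  have injI0: "inj_on b I0" using inj_on_subset[OF injb I0s] .
  have finJ0: "finite J0" and finI0: "finite I0" using J0s I0s finite_subset by blast+
  have cardV: "card (a ` J0 \<union> b ` I0) = q + v"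
    using card_Un_disjoint[OF _ _ dJI] finJ0 finI0 card_image[OF injJ0] card_image[OF injI0] cJ0 v_def by simp
  have NT: "q + v + T = m + n" using cardV V Tle by simp
  have sumV: "sum id (a ` J0 \<union> b ` I0) = sum a J0 + sum b I0"
    using sum.union_disjoint[OF _ _ dJI, of id] finJ0 finI0 sum.reindex[OF injJ0, of id] sum.reindex[OF injI0, of id]
    by simp
  have L: "2*(q+v)*Suc T + (q+v)*(q+v) \<le> 2*(sum a J0 + sum b I0) + (q+v)"
  proof -
    have fV: "finite (a ` J0 \<union> b ` I0)" using finJ0 finI0 by blast
    have bV: "\<forall>x\<in>a ` J0 \<union> b ` I0. Suc T \<le> x" unfolding V by simp
    show ?thesis using sum_lower[OF fV bV] unfolding cardV sumV .
  qed
  have sa: "sum a J0 = sum id J0 + sum (cs m X) J0" unfolding a_def sum.distrib by simp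
  have sb: "sum b I0 = sum id I0 + sum (rs n Y) I0" unfolding b_def sum.distrib by simp
  have U1: "2*sum id J0 + q*q \<le> 2*q*n + q" using sum_upper[OF finJ0, of n] J0s cJ0 by force
  have U2: "2*sum id I0 + v*v \<le> 2*v*m + v" using sum_upper[OF finI0, of m] I0s v_def by force
  have A: "sum (cs m X) J0 + q * p \<le> sum (rs n X) I + q * m"
    using partA[OF X1 I J0s] cJ0 p_def by simp
  have B0: "sum (cs n (\<lambda>j i. Y i j)) I0 + card I0 * card J \<le> sum (rs m (\<lambda>j i. Y i j)) J + card I0 * n"
    by (rule partA[OF _ J I0s]) (use Y1 in auto)
  have B: "sum (rs n Y) I0 + v * q \<le> sum (cs m Y) J + v * n"
    using B0 unfolding cs_def rs_def v_def q_def by simp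
  define sJ where "sJ = sum id J0"
  define sI where "sI = sum id I0"
  define cJ where "cJ = sum (cs m X) J0"
  define rI where "rI = sum (rs n Y) I0"
  define P where "P = sum (rs n X) I"
  define Q where "Q = sum (cs m Y) J"
  have Ln: "2*(q+v)*Suc T + (q+v)*(q+v) \<le> 2*(sJ + cJ + sI + rI) + q + v"
    using L sa sb unfolding sJ_def sI_def cJ_def rI_def by simp
  have Li: "int (2*(q+v)*Suc T + (q+v)*(q+v)) \<le> int (2*(sJ + cJ + sI + rI) + q + v)"
    using Ln by (simp only: of_nat_le_iff)
  have E: "int (2*(q+v)*Suc T + (q+v)*(q+v)) = 2*int q*int m+2*int q*int n+2*int v*int m+2*int v*int n
       - int q*int q - 2*int q*int v - int v*int v + 2*int q + 2*int v"
  proof -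
    have Tm: "int T = int m + int n - int q - int v" using NT by linarith
    show ?thesis by (simp add: Tm algebra_simps)
  qed
  have U1i: "2*int sJ + int q*int q \<le> 2*int q*int n + int q" using U1 unfolding sJ_def
    by (metis (mono_tags) of_nat_add of_nat_le_iff of_nat_mult of_nat_numeral)
  have U2i: "2*int sI + int v*int v \<le> 2*int v*int m + int v" using U2 unfolding sI_def
    by (metis (mono_tags) of_nat_add of_nat_le_iff of_nat_mult of_nat_numeral)
  have Ai: "int cJ + int q * int p \<le> int P + int q * int m" using A unfolding cJ_def P_def
    by (metis (mono_tags) of_nat_add of_nat_le_iff of_nat_mult)
  have Bi: "int rI + int v * int q \<le> int Q + int v * int n" using B unfolding rI_def Q_def
    by (metis (mono_tags) of_nat_add of_nat_le_iff of_nat_mult)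
  have "int p * int q \<le> int P + int Q"
    using E Li U1i U2i Ai Bi by (simp add: algebra_simps)
  then show ?thesis unfolding p_def q_def P_def Q_def by (metis of_nat_add of_nat_le_iff of_nat_mult)
qed


lemma gauss2: "2 * sum id {1..k} = k * Suc (k::nat)"
  by (induction k) (simp_all add: algebra_simps)

lemma sum_ind: "finite A \<Longrightarrow> (\<Sum>j\<in>A. if P j then (1::nat) else 0) = card {j\<in>A. P j}"
proof -
  assume f: "finite A"
  have "(\<Sum>j\<in>A. if P j then (1::nat) else 0) = (\<Sum>j\<in>{j\<in>A. P j}. 1)"
    using sum.inter_filter[OF f, of "\<lambda>_. (1::nat)" P] by simp
  then show ?thesis by simp
qed

theorem mainTheorem10:
  fixes m n :: nat and \<mu> \<nu> :: "nat \<Rightarrow> nat"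
  assumes "\<exists>S1 S2. syl_rep m n \<mu> \<nu> S1 S2"
  shows "\<exists>R. res_rep m n \<mu> \<nu> R"
proof -
  obtain S1 S2 where syl: "syl_rep m n \<mu> \<nu> S1 S2" using assms by blast
  have X01: "\<forall>i\<in>{1..m}. \<forall>j\<in>{1..n}. S1 i j \<le> 1" and Y01: "\<forall>i\<in>{1..m}. \<forall>j\<in>{1..n}. S2 i j \<le> 1"
    using syl unfolding syl_rep_def is01_def by fastforce+
  have mu: "\<forall>i\<in>{1..m}. rs n S1 i = \<mu> i" and nu: "\<forall>j\<in>{1..n}. cs m S2 j = \<nu> j"
    using syl unfolding syl_rep_def by blast+
  define a where "a j = j + cs m S1 j" for j
  define b where "b i = i + rs n S2 i" for i
  have cov: "a ` {1..n} \<union> b ` {1..m} = {1..m+n}"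
    using syl unfolding syl_rep_def PC_def acs_def ars_def a_def b_def by simp
  have fA: "finite (a ` {1..n})" and fB: "finite (b ` {1..m})" by simp_all
  have cA: "card (a ` {1..n}) \<le> n" and cB: "card (b ` {1..m}) \<le> m"
    using card_image_le[of "{1..n}" a] card_image_le[of "{1..m}" b] by simp_all
  have "m + n = card (a ` {1..n} \<union> b ` {1..m})" using cov by simp
  moreover have "card (a ` {1..n}) + card (b ` {1..m}) = card (a ` {1..n} \<union> b ` {1..m}) + card (a ` {1..n} \<inter> b ` {1..m})"
    by (rule card_Un_Int[OF fA fB])
  ultimately have cA': "card (a ` {1..n}) = n" and cB': "card (b ` {1..m}) = m"
    and cI: "card (a ` {1..n} \<inter> b ` {1..m}) = 0" using cA cB by linarith+
  have disj: "a ` {1..n} \<inter> b ` {1..m} = {}" using cI fA by simp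
  have inja: "inj_on a {1..n}" by (rule eq_card_imp_inj_on) (use cA' in simp_all)
  have injb: "inj_on b {1..m}" by (rule eq_card_imp_inj_on) (use cB' in simp_all)
  define G where "G = {1..m} \<times> {1..n}"
  have cutc: "\<forall>I J. I \<subseteq> {1..m} \<longrightarrow> J \<subseteq> {1..n} \<longrightarrow> card (G \<inter> I\<times>J) \<le> sum \<mu> I + sum \<nu> J"
  proof (intro allI impI)
    fix I J assume I: "I \<subseteq> {1..m}" and J: "J \<subseteq> {1..n}"
    have "G \<inter> I\<times>J = I \<times> J" using I J G_def by blast
    then have "card (G \<inter> I\<times>J) = card I * card J" by (simp add: card_cartesian_product)
    also have "\<dots> \<le> sum (rs n S1) I + sum (cs m S2) J"
      by (rule cut[OF _ _ X01 Y01 inja injb disj cov I J]) (simp_all add: a_def b_def)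
    also have "sum (rs n S1) I = sum \<mu> I" using mu I by (intro sum.cong) auto
    also have "sum (cs m S2) J = sum \<nu> J" using nu J by (intro sum.cong) auto
    finally show "card (G \<inter> I\<times>J) \<le> sum \<mu> I + sum \<nu> J" .
  qed
  have tot: "card G = sum \<mu> {1..m} + sum \<nu> {1..n}"
  proof -
    have sV: "sum id (a ` {1..n} \<union> b ` {1..m}) = sum a {1..n} + sum b {1..m}"
      using sum.union_disjoint[OF fA fB disj, of id] sum.reindex[OF inja, of id] sum.reindex[OF injb, of id]
      by simp
    have sa: "sum a {1..n} = sum id {1..n} + sum \<mu> {1..m}"
    proof -
      have "sum (cs m S1) {1..n} = sum (rs n S1) {1..m}" unfolding cs_def rs_def by (rule sum.swap)
      also have "\<dots> = sum \<mu> {1..m}" using mu by (intro sum.cong) auto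
      finally show ?thesis unfolding a_def sum.distrib by simp
    qed
    have sb: "sum b {1..m} = sum id {1..m} + sum \<nu> {1..n}"
    proof -
      have "sum (rs n S2) {1..m} = sum (cs m S2) {1..n}" unfolding cs_def rs_def by (rule sum.swap)
      also have "\<dots> = sum \<nu> {1..n}" using nu by (intro sum.cong) auto
      finally show ?thesis unfolding b_def sum.distrib by simp
    qed
    have e: "sum id {1..m+n} = sum id {1..n} + sum \<mu> {1..m} + sum id {1..m} + sum \<nu> {1..n}"
      using sV sa sb cov by simp
    have "2 * (sum \<mu> {1..m} + sum \<nu> {1..n}) = (m+n)*Suc(m+n) - n * Suc n - m * Suc m"
      using arg_cong[OF e, of "\<lambda>x. 2*x"] gauss2[of "m+n"] gauss2[of n] gauss2[of m] by simp
    also have "\<dots> = 2 * (m*n)" by (simp add: algebra_simps)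
    finally show ?thesis unfolding G_def by simp
  qed
  obtain F where F: "F \<subseteq> G" "\<forall>i\<in>{1..m}. card {j. (i,j)\<in>F} = \<mu> i" "\<forall>j\<in>{1..n}. card {i. (i,j) \<in> G - F} = \<nu> j"
    using orient[of G m n \<mu> \<nu>] G_def tot cutc by auto
  define R where "R i j = (if (i,j) \<in> F then 1 else 0::nat)" for i j
  have "is01 m n R" unfolding is01_def R_def by simp
  moreover have "\<forall>i\<in>{1..m}. rs n R i = \<mu> i"
  proof
    fix i assume i: "i \<in> {1..m}"
    have "rs n R i = card {j\<in>{1..n}. (i,j)\<in>F}" unfolding rs_def R_def by (rule sum_ind) simp
    also have "{j\<in>{1..n}. (i,j)\<in>F} = {j. (i,j)\<in>F}" using F(1) G_def by blast
    finally show "rs n R i = \<mu> i" using F(2) i by simp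
  qed
  moreover have "\<forall>j\<in>{1..n}. cs m (compl R) j = \<nu> j"
  proof
    fix j assume j: "j \<in> {1..n}"
    have "cs m (compl R) j = (\<Sum>i\<in>{1..m}. if (i,j) \<notin> F then 1 else 0)"
      unfolding cs_def compl_def R_def by (intro sum.cong) auto
    also have "\<dots> = card {i\<in>{1..m}. (i,j)\<notin>F}" by (rule sum_ind) simp
    also have "{i\<in>{1..m}. (i,j)\<notin>F} = {i. (i,j)\<in>G - F}" using j G_def by blast
    finally show "cs m (compl R) j = \<nu> j" using F(3) j by simp
  qed
  ultimately show ?thesis unfolding res_rep_def by blast
qed

end
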